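(* Let $q\in\mathbb R$ and let $\mu$ be a compactly supported Borel probability measure on $\mathbb R^n$. Then for every $E\subseteq\operatorname{supp}\mu$, $$\mathsf b^q_\mu(E)=\sup_{F\subseteq E}\ \inf\Big\{\sup_i\Theta^q_\mu(F_i):F\subseteq\bigcup_iF_i,\ F_i\text{ bounded}\Big\}$$ and $$\mathsf B^q_\mu(E)=\inf\Big\{\sup_i\mathsf\Delta^q_\mu(E_i):E\subseteq\bigcup_iE_i,\ E_i\text{ bounded}\Big\},$$ where the unions are countable.
   Context: $B(x,r)$ is the closed ball. A centred covering of $E$ by $r$-balls is a family $(B(x_i,r))_i$ with $x_i\in E$ covering $E$; a centred packing is a family $(B(x_i,r))_i$ of pairwise disjoint closed balls with $x_i\in E$. $N^q_{\mu,r}(E)=\inf\sum_i\mu(B(x_i,r))^q$ over centred coverings, $M^q_{\mu,r}(E)=\sup\sum_i\mu(B(x_i,r))^q$ over centred packings. $\mathsf L^{q,t}_\mu(E)=\liminf_{r\to0}N^q_{\mu,r}(E)(2r)^t$, $\mathsf C^{q,t}_\mu(E)=\limsup_{r\to0}M^q_{\mu,r}(E)(2r)^t$; $\overline{\mathsf H}^{q,t}_\mu(E)=\inf\{\sum_i\mathsf L^{q,t}_\mu(E_i):E\subseteq\bigcup_iE_i,\ E_i\text{ bounded}\}$, $\mathsf H^{q,t}_\mu(E)=\sup_{F\subseteq E}\overline{\mathsf H}^{q,t}_\mu(F)$, $\mathsf P^{q,t}_\mu(E)=\inf\{\sum_i\mathsf C^{q,t}_\mu(E_i):E\subseteq\bigcup_iE_i,\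 E_i\text{ bounded}\}$. The numbers $\mathsf b^q_\mu(E),\mathsf B^q_\mu(E),\mathsf\Delta^q_\mu(E),\Theta^q_\mu(E)\in[-\infty,\infty]$ are the unique thresholds in $t$ at which $\mathsf H^{q,t}_\mu(E)$, $\mathsf P^{q,t}_\mu(E)$, $\mathsf C^{q,t}_\mu(E)$, $\mathsf L^{q,t}_\mu(E)$ respectively jump from $\infty$ (for smaller $t$) to $0$ (for larger $t$). *)

theory Defs
  imports "HOL-Analysis.Analysis" "HOL-Probability.Probability"
begin

definition msupp :: "'a::metric_space measure \<Rightarrow> 'a set" where
  "msupp \<mu> = {x. \<forall>e>0. emeasure \<mu> (ball x e) > 0}"

text \<open>The power m^q of a mass m, with the usual multifractal convention
  0^q = \<infinity> for q \<le> 0 and 0^q = 0 for q > 0.\<close>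
definition qpow :: "real \<Rightarrow> real \<Rightarrow> ennreal" where
  "qpow q m = (if m > 0 then ennreal (m powr q) else if q \<le> 0 then \<infinity> else 0)"

definition centred_cover :: "'a::metric_space set \<Rightarrow> real \<Rightarrow> 'a set \<Rightarrow> bool" where
  "centred_cover E r X \<longleftrightarrow> X \<subseteq> E \<and> E \<subseteq> (\<Union>x\<in>X. cball x r)"

definition centred_packing :: "'a::metric_space set \<Rightarrow> real \<Rightarrow> 'a set \<Rightarrow> bool" where
  "centred_packing E r X \<longleftrightarrow> X \<subseteq> E \<and>
     (\<forall>x\<in>X. \<forall>y\<in>X. x \<noteq> y \<longrightarrow> cball x r \<inter> cball y r = {})"

definition Ncov :: "'a::metric_space measure \<Rightarrow> real \<Rightarrow> real \<Rightarrow> 'a set \<Rightarrow> ennreal" where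
  "Ncov \<mu> q r E = (INF X\<in>{X. centred_cover E r X}. \<Sum>\<^sub>\<infinity>x\<in>X. qpow q (measure \<mu> (cball x r)))"

definition Mpack :: "'a::metric_space measure \<Rightarrow> real \<Rightarrow> real \<Rightarrow> 'a set \<Rightarrow> ennreal" where
  "Mpack \<mu> q r E = (SUP X\<in>{X. centred_packing E r X}. \<Sum>\<^sub>\<infinity>x\<in>X. qpow q (measure \<mu> (cball x r)))"

definition Lmf :: "'a::metric_space measure \<Rightarrow> real \<Rightarrow> real \<Rightarrow> 'a set \<Rightarrow> ennreal" where
  "Lmf \<mu> q t E = Liminf (at_right 0) (\<lambda>r. Ncov \<mu> q r E * ennreal ((2 * r) powr t))"

definition Cmf :: "'a::metric_space measure \<Rightarrow> real \<Rightarrow> real \<Rightarrow> 'a set \<Rightarrow> ennreal" where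
  "Cmf \<mu> q t E = Limsup (at_right 0) (\<lambda>r. Mpack \<mu> q r E * ennreal ((2 * r) powr t))"

definition Hbar :: "'a::metric_space measure \<Rightarrow> real \<Rightarrow> real \<Rightarrow> 'a set \<Rightarrow> ennreal" where
  "Hbar \<mu> q t E = (INF Es\<in>{Es :: nat \<Rightarrow> 'a set. E \<subseteq> (\<Union>i. Es i) \<and> (\<forall>i. bounded (Es i))}.
      \<Sum>i. Lmf \<mu> q t (Es i))"

definition Hmf :: "'a::metric_space measure \<Rightarrow> real \<Rightarrow> real \<Rightarrow> 'a set \<Rightarrow> ennreal" where
  "Hmf \<mu> q t E = (SUP F\<in>Pow E. Hbar \<mu> q t F)"

definition Pmf :: "'a::metric_space measure \<Rightarrow> real \<Rightarrow> real \<Rightarrow> 'a set \<Rightarrow> ennreal" where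
  "Pmf \<mu> q t E = (INF Es\<in>{Es :: nat \<Rightarrow> 'a set. E \<subseteq> (\<Union>i. Es i) \<and> (\<forall>i. bounded (Es i))}.
      \<Sum>i. Cmf \<mu> q t (Es i))"

definition threshold :: "(real \<Rightarrow> ennreal) \<Rightarrow> ereal" where
  "threshold f = Inf {ereal t | t. f t = 0}"

definition bdim :: "'a::metric_space measure \<Rightarrow> real \<Rightarrow> 'a set \<Rightarrow> ereal" where
  "bdim \<mu> q E = threshold (\<lambda>t. Hmf \<mu> q t E)"

definition Bdim :: "'a::metric_space measure \<Rightarrow> real \<Rightarrow> 'a set \<Rightarrow> ereal" where
  "Bdim \<mu> q E = threshold (\<lambda>t. Pmf \<mu> q t E)"

definition Deltadim :: "'a::metric_space measure \<Rightarrow> real \<Rightarrow> 'a set \<Rightarrow> ereal" where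
  "Deltadim \<mu> q E = threshold (\<lambda>t. Cmf \<mu> q t E)"

definition Thetadim :: "'a::metric_space measure \<Rightarrow> real \<Rightarrow> 'a set \<Rightarrow> ereal" where
  "Thetadim \<mu> q E = threshold (\<lambda>t. Lmf \<mu> q t E)"

end

theory Submission
  imports Defs
begin

lemma dens:
  fixes x y :: ereal
  assumes "\<And>s. y < ereal s \<Longrightarrow> x \<le> ereal s"
  shows "x \<le> y"
proof (rule ccontr)
  assume "\<not> x \<le> y" then have "y < x" by simp
  then obtain z where "y < ereal z" "ereal z < x" using ereal_dense2 by blast
  with assms show False by force
qed

lemma thr_le: "f t = 0 \<Longrightarrow> threshold f \<le> ereal t"
  unfolding threshold_def by (rule Inf_lower) blast

lemma thr_less: "threshold f < ereal s \<Longrightarrow> \<exists>t<s. f t = 0"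
  unfolding threshold_def by (auto simp: Inf_less_iff)

lemma J_mono:
  assumes J: "\<And>t s F. t < s \<Longrightarrow> \<phi> t F < \<infinity> \<Longrightarrow> \<phi> s F = 0"
    and "threshold (\<lambda>t. \<phi> t F) < ereal s"
  shows "\<phi> s F = 0"
proof -
  obtain t where "t < s" "\<phi> t F = 0" using thr_less[OF assms(2)] by blast
  then show ?thesis using J by auto
qed

lemma gen_thr:
  fixes \<phi> :: "real \<Rightarrow> 'a::metric_space set \<Rightarrow> ennreal"
  assumes J: "\<And>t s F. t < s \<Longrightarrow> \<phi> t F < \<infinity> \<Longrightarrow> \<phi> s F = 0"
  shows "threshold (\<lambda>t. INF Es\<in>{Es :: nat \<Rightarrow> 'a set. E \<subseteq> (\<Union>i. Es i) \<and> (\<forall>i. bounded (Es i))}.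
      \<Sum>i. \<phi> t (Es i)) =
    (INF Es\<in>{Es :: nat \<Rightarrow> 'a set. E \<subseteq> (\<Union>i. Es i) \<and> (\<forall>i. bounded (Es i))}.
      SUP i. threshold (\<lambda>t. \<phi> t (Es i)))"
    (is "threshold (\<lambda>t. INF Es\<in>?C. ?S t Es) = ?R")
proof (rule antisym)
  show "threshold (\<lambda>t. INF Es\<in>?C. ?S t Es) \<le> ?R"
  proof (rule dens)
    fix s assume "?R < ereal s"
    then obtain Es where Es: "Es \<in> ?C" "(SUP i. threshold (\<lambda>t. \<phi> t (Es i))) < ereal s"
      by (auto simp: INF_less_iff)
    have "\<phi> s (Es i) = 0" for i
    proof (rule J_mono[OF J])
      have "threshold (\<lambda>t. \<phi> t (Es i)) \<le> (SUP i. threshold (\<lambda>t. \<phi> t (Es i)))"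
        by (rule SUP_upper) simp
      with Es(2) show "threshold (\<lambda>t. \<phi> t (Es i)) < ereal s" by simp
    qed
    then have "?S s Es = 0" by simp
    then have "(INF Es\<in>?C. ?S s Es) = 0"
      using INF_lower[OF Es(1), of "?S s"] by (simp add: le_zero_eq)
    then show "threshold (\<lambda>t. INF Es\<in>?C. ?S t Es) \<le> ereal s" by (rule thr_le)
  qed
next
  show "?R \<le> threshold (\<lambda>t. INF Es\<in>?C. ?S t Es)"
  proof (rule dens)
    fix s assume "threshold (\<lambda>t. INF Es\<in>?C. ?S t Es) < ereal s"
    then obtain t where t: "t < s" "(INF Es\<in>?C. ?S t Es) = 0" using thr_less by blast
    then have "(INF Es\<in>?C. ?S t Es) < 1" by simp
    then obtain Es where Es: "Es \<in> ?C" "?S t Es < 1" by (auto simp: INF_less_iff)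
    have lt1: "\<phi> t (Es i) < 1" for i using Es(2) by (rule ennreal_suminf_lessD)
    have one: "(1::ennreal) < \<infinity>" by simp
    have "\<phi> t (Es i) < \<infinity>" for i by (rule order.strict_trans[OF lt1 one])
    then have "\<phi> s (Es i) = 0" for i using J t(1) by blast
    then have "threshold (\<lambda>t. \<phi> t (Es i)) \<le> ereal s" for i by (rule thr_le)
    then have "(SUP i. threshold (\<lambda>t. \<phi> t (Es i))) \<le> ereal s" by (rule SUP_least)
    then show "?R \<le> ereal s" using INF_lower[OF Es(1), of "\<lambda>Es. SUP i. threshold (\<lambda>t. \<phi> t (Es i))"]
      by (rule order.trans[rotated])
  qed
qed

lemma gen_mono:
  fixes \<phi> :: "real \<Rightarrow> 'a::metric_space set \<Rightarrow> ennreal"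
  assumes J: "\<And>t s F. t < s \<Longrightarrow> \<phi> t F < \<infinity> \<Longrightarrow> \<phi> s F = 0"
    and ts: "t \<le> s"
    and z: "(INF Es\<in>{Es :: nat \<Rightarrow> 'a set. E \<subseteq> (\<Union>i. Es i) \<and> (\<forall>i. bounded (Es i))}.
      \<Sum>i. \<phi> t (Es i)) = 0"
  shows "(INF Es\<in>{Es :: nat \<Rightarrow> 'a set. E \<subseteq> (\<Union>i. Es i) \<and> (\<forall>i. bounded (Es i))}.
      \<Sum>i. \<phi> s (Es i)) = 0"
    (is "(INF Es\<in>?C. ?S s Es) = 0")
proof (cases "t = s")
  case True then show ?thesis using z by simp
next
  case False
  with ts have ts: "t < s" by simp
  from z have "(INF Es\<in>?C. ?S t Es) < 1" by simp
  then obtain Es where Es: "Es \<in> ?C" "?S t Es < 1" by (auto simp: INF_less_iff)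
  have lt1: "\<phi> t (Es i) < 1" for i using Es(2) by (rule ennreal_suminf_lessD)
  have one: "(1::ennreal) < \<infinity>" by simp
  have "\<phi> t (Es i) < \<infinity>" for i by (rule order.strict_trans[OF lt1 one])
  then have "\<phi> s (Es i) = 0" for i using J ts by blast
  then have "?S s Es = 0" by simp
  then show ?thesis
    using INF_lower[OF Es(1), of "?S s"] by (simp add: le_zero_eq)
qed

lemma thr_sup:
  fixes g :: "real \<Rightarrow> 'b \<Rightarrow> ennreal"
  assumes mono: "\<And>t s F. t \<le> s \<Longrightarrow> g t F = 0 \<Longrightarrow> g s F = 0"
  shows "threshold (\<lambda>t. SUP F\<in>A. g t F) = (SUP F\<in>A. threshold (\<lambda>t. g t F))"
proof (rule antisym)
  show "threshold (\<lambda>t. SUP F\<in>A. g t F) \<le> (SUP F\<in>A. threshold (\<lambda>t. g t F))"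
  proof (rule dens)
    fix s assume "(SUP F\<in>A. threshold (\<lambda>t. g t F)) < ereal s"
    then have "threshold (\<lambda>t. g t F) < ereal s" if "F \<in> A" for F
      using SUP_upper[OF that, of "\<lambda>F. threshold (\<lambda>t. g t F)"] by simp
    then have "g s F = 0" if "F \<in> A" for F
      using thr_less mono that by (meson less_imp_le)
    then have "(SUP F\<in>A. g s F) \<le> 0" by (intro SUP_least) simp
    then have "(SUP F\<in>A. g s F) = 0" by (simp add: le_zero_eq)
    then show "threshold (\<lambda>t. SUP F\<in>A. g t F) \<le> ereal s" by (rule thr_le)
  qed
next
  show "(SUP F\<in>A. threshold (\<lambda>t. g t F)) \<le> threshold (\<lambda>t. SUP F\<in>A. g t F)"
  proof (rule SUP_least)
    fix F assume F: "F \<in> A"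
    show "threshold (\<lambda>t. g t F) \<le> threshold (\<lambda>t. SUP F\<in>A. g t F)"
      unfolding threshold_def
    proof (rule Inf_greatest)
      fix x assume "x \<in> {ereal t |t. (SUP F\<in>A. g t F) = 0}"
      then obtain t where t: "x = ereal t" "(SUP F\<in>A. g t F) = 0" by blast
      then have "g t F = 0" using SUP_upper[OF F, of "g t"] by (simp add: le_zero_eq)
      then show "Inf {ereal t |t. g t F = 0} \<le> x" using t(1) by (intro Inf_lower) blast
    qed
  qed
qed

lemma powr_lim: "a > 0 \<Longrightarrow> ((\<lambda>r::real. (2*r) powr a) \<longlongrightarrow> 0) (at_right 0)"
  by (rule tendsto_zero_powrI) (auto intro!: tendsto_eq_intros eventually_at_rightI[of 0 1])

lemma split_eq:
  fixes M :: ennreal and r :: real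
  assumes "r > 0"
  shows "M * ennreal ((2*r) powr s) = (M * ennreal ((2*r) powr t)) * ennreal ((2*r) powr (s-t))"
proof -
  have "(2*r) powr s = (2*r) powr t * (2*r) powr (s-t)"
    by (simp add: powr_add[symmetric])
  then show ?thesis by (simp add: ennreal_mult mult.assoc)
qed

lemma fin_bound:
  fixes L :: ennreal
  assumes "L < \<infinity>"
  obtains C where "C > 0" "L < ennreal C"
proof -
  have "L = ennreal (enn2real L)" using assms by simp
  moreover have "ennreal (enn2real L) < ennreal (enn2real L + 1)"
    by (simp add: ennreal_lessI)
  ultimately have "L < ennreal (enn2real L + 1)" by simp
  moreover have "enn2real L + 1 > 0" by (simp add: add_nonneg_pos)
  ultimately show ?thesis using that by blast
qed

lemma pos_real:
  fixes L :: ennreal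
  assumes "0 < L"
  obtains yr where "yr > 0" "ennreal yr < L"
proof -
  obtain y where y: "0 < y" "y < L" using dense assms by blast
  then have "y < \<infinity>" using top.not_eq_extremum by fastforce
  then have "y = ennreal (enn2real y)" by simp
  moreover have "enn2real y > 0" using y \<open>y < \<infinity>\<close>
    by (simp add: enn2real_positive_iff)
  ultimately show ?thesis using that y by metis
qed

lemma prod_small:
  fixes f :: "real \<Rightarrow> ennreal"
  assumes "f r < ennreal C" "C > 0" "yr > 0" "(2*r) powr a < yr / C"
  shows "f r * ennreal ((2*r) powr a) \<le> ennreal yr"
proof -
  have "f r * ennreal ((2*r) powr a) \<le> ennreal C * ennreal (yr / C)"
    using assms by (intro mult_mono) (auto intro!: ennreal_leI)
  also have "\<dots> = ennreal yr" using assms by (simp add: ennreal_mult[symmetric])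
  finally show ?thesis .
qed

lemma J_Cmf:
  assumes "t < s" "Cmf \<mu> q t F < \<infinity>"
  shows "Cmf \<mu> q s F = 0"
proof (rule ccontr)
  let ?f = "\<lambda>r. Mpack \<mu> q r F * ennreal ((2*r) powr t)"
  assume "Cmf \<mu> q s F \<noteq> 0"
  then have "0 < Cmf \<mu> q s F" by (simp add: zero_less_iff_neq_zero)
  then obtain yr where yr: "yr > 0" "ennreal yr < Cmf \<mu> q s F" by (rule pos_real)
  obtain C where C: "C > 0" "Limsup (at_right 0) ?f < ennreal C"
    using assms(2) unfolding Cmf_def by (rule fin_bound)
  have ev1: "eventually (\<lambda>r. ?f r < ennreal C) (at_right 0)" using C(2) by (rule Limsup_lessD)
  have st: "0 < s - t" using assms(1) by simp
  have yC: "0 < yr / C" using yr(1) C(1) by simp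
  have ev2: "eventually (\<lambda>r. (2*r) powr (s-t) < yr / C) (at_right 0)"
    by (rule order_tendstoD(2)[OF powr_lim[OF st] yC])
  have "eventually (\<lambda>r. Mpack \<mu> q r F * ennreal ((2*r) powr s) \<le> ennreal yr) (at_right 0)"
    using ev1 ev2 eventually_at_right_less[of 0]
  proof eventually_elim
    case (elim r)
    have "Mpack \<mu> q r F * ennreal ((2*r) powr s) = ?f r * ennreal ((2*r) powr (s-t))"
      using elim by (intro split_eq) blast
    also have "\<dots> \<le> ennreal yr"
      using elim by (intro prod_small[OF _ C(1) yr(1)]) blast+
    finally show ?case .
  qed
  then have "Cmf \<mu> q s F \<le> ennreal yr" unfolding Cmf_def by (rule Limsup_bounded)
  then have "\<not> ennreal yr < Cmf \<mu> q s F" by (rule leD)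
  with yr(2) show False by contradiction
qed

lemma J_Lmf:
  assumes "t < s" "Lmf \<mu> q t F < \<infinity>"
  shows "Lmf \<mu> q s F = 0"
proof (rule ccontr)
  let ?f = "\<lambda>r. Ncov \<mu> q r F * ennreal ((2*r) powr t)"
  assume "Lmf \<mu> q s F \<noteq> 0"
  then have "0 < Lmf \<mu> q s F" by (simp add: zero_less_iff_neq_zero)
  then obtain yr where yr: "yr > 0" "ennreal yr < Lmf \<mu> q s F" by (rule pos_real)
  obtain C where C: "C > 0" "Liminf (at_right 0) ?f < ennreal C"
    using assms(2) unfolding Lmf_def by (rule fin_bound)
  have fr1: "frequently (\<lambda>r. ?f r < ennreal C) (at_right 0)"
  proof -
    from C(2) have "\<not> ennreal C \<le> Liminf (at_right 0) ?f" by simp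
    then obtain y where y: "y < ennreal C" "\<not> eventually (\<lambda>x. y < ?f x) (at_right 0)"
      unfolding le_Liminf_iff by blast
    then have "frequently (\<lambda>x. ?f x \<le> y) (at_right 0)"
      by (simp add: frequently_def not_le)
    then show ?thesis by (rule frequently_elim1) (use y(1) in auto)
  qed
  have ev3: "eventually (\<lambda>r. ennreal yr < Ncov \<mu> q r F * ennreal ((2*r) powr s)) (at_right 0)"
  proof -
    have "ennreal yr < Liminf (at_right 0) (\<lambda>r. Ncov \<mu> q r F * ennreal ((2*r) powr s))"
      using yr(2) unfolding Lmf_def .
    moreover have "\<forall>y<Liminf (at_right 0) (\<lambda>r. Ncov \<mu> q r F * ennreal ((2*r) powr s)).
       eventually (\<lambda>x. y < Ncov \<mu> q x F * ennreal ((2*x) powr s)) (at_right 0)"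
      using le_Liminf_iff[THEN iffD1, OF order_refl] .
    ultimately show ?thesis by blast
  qed
  have st: "0 < s - t" using assms(1) by simp
  have yC: "0 < yr / C" using yr(1) C(1) by simp
  have ev2: "eventually (\<lambda>r. (2*r) powr (s-t) < yr / C) (at_right 0)"
    by (rule order_tendstoD(2)[OF powr_lim[OF st] yC])
  have "frequently (\<lambda>r. False) (at_right (0::real))"
  proof (rule frequently_rev_mp[OF fr1])
    show "\<forall>\<^sub>F x in at_right 0. ?f x < ennreal C \<longrightarrow> False"
      using eventually_conj[OF eventually_conj[OF ev2 ev3] eventually_at_right_less[of 0]]
    proof eventually_elim
      case (elim r)
      show ?case
      proof
        assume "?f r < ennreal C"
        then have h1: "?f r * ennreal ((2*r) powr (s-t)) \<le> ennreal yr"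
          using elim by (intro prod_small[OF _ C(1) yr(1)]) blast+
        have h2: "Ncov \<mu> q r F * ennreal ((2*r) powr s) = ?f r * ennreal ((2*r) powr (s-t))"
          using elim by (intro split_eq) blast
        have e: "ennreal yr < Ncov \<mu> q r F * ennreal ((2*r) powr s)" using elim by blast
        have "ennreal yr < ennreal yr" using order.strict_trans2[OF e[unfolded h2] h1] .
        then show False by simp
      qed
    qed
  qed
  then show False by (rule not_frequently_False[THEN notE])
qed

theorem proposition2p6:
  fixes \<mu> :: "'a::euclidean_space measure" and q :: real and E :: "'a set"
  assumes "sets \<mu> = sets borel"
    and "prob_space \<mu>"
    and "compact (msupp \<mu>)"
    and "E \<subseteq> msupp \<mu>"
  shows "(bdim \<mu> q E =
           (SUP F\<in>Pow E. INF Fs\<in>{Fs :: nat \<Rightarrow> 'a set. F \<subseteq> (\<Union>i. Fs i) \<and> (\<forall>i. bounded (Fs i))}.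
              SUP i. Thetadim \<mu> q (Fs i))) \<and>
         (Bdim \<mu> q E =
           (INF Es\<in>{Es :: nat \<Rightarrow> 'a set. E \<subseteq> (\<Union>i. Es i) \<and> (\<forall>i. bounded (Es i))}.
              SUP i. Deltadim \<mu> q (Es i)))"
proof
  have JL: "\<And>t s F. t < s \<Longrightarrow> Lmf \<mu> q t F < \<infinity> \<Longrightarrow> Lmf \<mu> q s F = 0" by (rule J_Lmf)
  have JC: "\<And>t s F. t < s \<Longrightarrow> Cmf \<mu> q t F < \<infinity> \<Longrightarrow> Cmf \<mu> q s F = 0" by (rule J_Cmf)
  have mono: "\<And>t s F. t \<le> s \<Longrightarrow> Hbar \<mu> q t F = 0 \<Longrightarrow> Hbar \<mu> q s F = 0"
    unfolding Hbar_def by (rule gen_mono[of "\<lambda>t F. Lmf \<mu> q t F", OF JL])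
  have "bdim \<mu> q E = threshold (\<lambda>t. SUP F\<in>Pow E. Hbar \<mu> q t F)"
    unfolding bdim_def Hmf_def ..
  also have "\<dots> = (SUP F\<in>Pow E. threshold (\<lambda>t. Hbar \<mu> q t F))"
    by (rule thr_sup[OF mono])
  also have "\<dots> = (SUP F\<in>Pow E. INF Fs\<in>{Fs :: nat \<Rightarrow> 'a set. F \<subseteq> (\<Union>i. Fs i) \<and> (\<forall>i. bounded (Fs i))}.
              SUP i. Thetadim \<mu> q (Fs i))"
    unfolding Hbar_def Thetadim_def
    by (rule SUP_cong[OF refl], rule gen_thr[of "\<lambda>t F. Lmf \<mu> q t F", OF JL])
  finally show "bdim \<mu> q E = (SUP F\<in>Pow E. INF Fs\<in>{Fs :: nat \<Rightarrow> 'a set. F \<subseteq> (\<Union>i. Fs i) \<and> (\<forall>i. bounded (Fs i))}.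
              SUP i. Thetadim \<mu> q (Fs i))" .
  show "Bdim \<mu> q E = (INF Es\<in>{Es :: nat \<Rightarrow> 'a set. E \<subseteq> (\<Union>i. Es i) \<and> (\<forall>i. bounded (Es i))}.
              SUP i. Deltadim \<mu> q (Es i))"
    unfolding Bdim_def Pmf_def Deltadim_def
    by (rule gen_thr[of "\<lambda>t F. Cmf \<mu> q t F", OF JC])
qed

end
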